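(* Let $E$ be a regular biordered set satisfying: (E1) there exists $0\in E$ with $0\,\omega\,e$ for every $e\in E$; (E2) there is a map $e\mapsto e'$ on $E$ such that for all $e,f\in E$: (i) $(e')'=e$; (ii) $f\,\omega^l\,e$ iff $e'\,\omega^r\,f'$; (iii) $f\,\omega^l\,e'$ iff $M(f,e)=\{0\}$. Then for each $e\in E$, the elements $\mathcal L(e)$ and $\mathcal L(e')$ are complements of each other in the lattice $L(E)=E/\mathcal L$.
   Context: A regular biordered set is a partial algebra isomorphic to the set of idempotents $E(S)$ of a regular semigroup $S$ (regular: every $x$ has $y$ with $xyx=x$), where $ef$ (computed in $S$) is defined when $\{ef,fe\}\cap\{e,f\}\ne\emptyset$. In $E$: $\omega^l=\{(e,f): ef=e\}$, $\omega^r=\{(e,f): fe=e\}$, $\omega=\omega^l\cap\omega^r$, $M(e,f)=\{g\in E: g\,\omega^l\,e,\ g\,\omega^r\,f\}$. $\mathcal L=\omega^l\cap(\omega^l)^{-1}$ with classes $\mathcal L(e)$; $E/\mathcal L$ is ordered by $\mathcal L(e)\le\mathcal L(f)$ iff $e\,\omega^l\,f$, and under (E1),(E2) it is a lattice with least element $\mathcal L(0)$ and greatest element $\mathcal L(1)$, where $1=0'$. Two elements $a,b$ are complements if $a\wedge b$ is the least element and $a\vee b$ the greatest element. *)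

theory Defs
  imports Main
begin

text \<open>A regular biordered set is (up to isomorphism) the set E(S) of idempotents of a
regular semigroup S, with the basic partial product inherited from S.\<close>

definition regular_semigroup :: "'a::semigroup_mult itself \<Rightarrow> bool" where
  "regular_semigroup _ \<longleftrightarrow> (\<forall>x::'a. \<exists>y. x * y * x = x)"

definition idem :: "'a::semigroup_mult set" where
  "idem = {e. e * e = e}"

definition omega_l :: "'a::semigroup_mult \<Rightarrow> 'a \<Rightarrow> bool" where
  "omega_l e f \<longleftrightarrow> e * f = e"

definition omega_r :: "'a::semigroup_mult \<Rightarrow> 'a \<Rightarrow> bool" where
  "omega_r e f \<longleftrightarrow> f * e = e"

definition omega :: "'a::semigroup_mult \<Rightarrow> 'a \<Rightarrow> bool" where
  "omega e f \<longleftrightarrow> omega_l e f \<and> omega_r e f"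

definition Mset :: "'a::semigroup_mult \<Rightarrow> 'a \<Rightarrow> 'a set" where
  "Mset e f = {g \<in> idem. omega_l g e \<and> omega_r g f}"

definition Lrel :: "'a::semigroup_mult \<Rightarrow> 'a \<Rightarrow> bool" where
  "Lrel e f \<longleftrightarrow> omega_l e f \<and> omega_l f e"

definition Lclass :: "'a::semigroup_mult \<Rightarrow> 'a set" where
  "Lclass e = {f \<in> idem. Lrel f e}"

definition LE :: "'a::semigroup_mult set set" where
  "LE = Lclass ` idem"

definition Lle :: "'a::semigroup_mult set \<Rightarrow> 'a set \<Rightarrow> bool" where
  "Lle A B \<longleftrightarrow> (\<exists>e\<in>idem. \<exists>f\<in>idem. A = Lclass e \<and> B = Lclass f \<and> omega_l e f)"

definition is_meet :: "('b \<Rightarrow> 'b \<Rightarrow> bool) \<Rightarrow> 'b set \<Rightarrow> 'b \<Rightarrow> 'b \<Rightarrow> 'b \<Rightarrow> bool" where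
  "is_meet R X a b m \<longleftrightarrow> m \<in> X \<and> R m a \<and> R m b \<and> (\<forall>z\<in>X. R z a \<and> R z b \<longrightarrow> R z m)"

definition is_join :: "('b \<Rightarrow> 'b \<Rightarrow> bool) \<Rightarrow> 'b set \<Rightarrow> 'b \<Rightarrow> 'b \<Rightarrow> 'b \<Rightarrow> bool" where
  "is_join R X a b j \<longleftrightarrow> j \<in> X \<and> R a j \<and> R b j \<and> (\<forall>z\<in>X. R a z \<and> R b z \<longrightarrow> R j z)"

definition is_least :: "('b \<Rightarrow> 'b \<Rightarrow> bool) \<Rightarrow> 'b set \<Rightarrow> 'b \<Rightarrow> bool" where
  "is_least R X m \<longleftrightarrow> m \<in> X \<and> (\<forall>z\<in>X. R m z)"

definition is_greatest :: "('b \<Rightarrow> 'b \<Rightarrow> bool) \<Rightarrow> 'b set \<Rightarrow> 'b \<Rightarrow> bool" where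
  "is_greatest R X m \<longleftrightarrow> m \<in> X \<and> (\<forall>z\<in>X. R z m)"

definition complements :: "('b \<Rightarrow> 'b \<Rightarrow> bool) \<Rightarrow> 'b set \<Rightarrow> 'b \<Rightarrow> 'b \<Rightarrow> bool" where
  "complements R X a b \<longleftrightarrow>
     (\<exists>m. is_meet R X a b m \<and> is_least R X m) \<and>
     (\<exists>j. is_join R X a b j \<and> is_greatest R X j)"

end

theory Submission
  imports Defs
begin

lemma idemD: "x \<in> idem \<Longrightarrow> x * x = x" by (simp add: idem_def)

lemma Lclass_eq: "x \<in> idem \<Longrightarrow> y \<in> idem \<Longrightarrow> Lclass x = Lclass y \<Longrightarrow> x * y = x \<and> y * x = y"
proof -
  assume a: "x \<in> idem" "y \<in> idem" "Lclass x = Lclass y"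
  have "x \<in> Lclass x" using a(1) by (simp add: Lclass_def Lrel_def omega_l_def idem_def)
  then have "x \<in> Lclass y" using a by simp
  then show ?thesis by (simp add: Lclass_def Lrel_def omega_l_def)
qed

lemma Lle_iff: "x \<in> idem \<Longrightarrow> y \<in> idem \<Longrightarrow> Lle (Lclass x) (Lclass y) \<longleftrightarrow> x * y = x"
proof
  assume a: "x \<in> idem" "y \<in> idem"
  assume "Lle (Lclass x) (Lclass y)"
  then obtain x' y' where b: "x' \<in> idem" "y' \<in> idem" "Lclass x = Lclass x'" "Lclass y = Lclass y'" "x' * y' = x'"
    unfolding Lle_def omega_l_def by blast
  have 1: "x * x' = x" "x' * x = x'" using Lclass_eq[OF a(1) b(1) b(3)] by auto
  have 2: "y * y' = y" "y' * y = y'" using Lclass_eq[OF a(2) b(2) b(4)] by auto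
  have "x * x' * y' = x * (x' * y')" by (rule mult.assoc)
  also have "\<dots> = x" by (simp only: b(5) 1)
  finally have xx: "x * x' * y' = x" .
  then have "x * y = x * x' * y' * y" by simp
  also have "\<dots> = x * x' * y'" using 2 by (simp add: mult.assoc)
  also have "\<dots> = x" by (rule xx)
  finally show "x * y = x" .
next
  assume a: "x \<in> idem" "y \<in> idem" "x * y = x"
  then show "Lle (Lclass x) (Lclass y)" unfolding Lle_def omega_l_def by blast
qed

theorem corollary3p5:
  fixes z :: "'a::semigroup_mult" and c :: "'a \<Rightarrow> 'a" and e :: 'a
  assumes reg: "regular_semigroup TYPE('a)"
    and E1: "z \<in> idem" "\<forall>f\<in>idem. omega z f"
    and E2_map: "\<forall>f\<in>idem. c f \<in> idem"
    and E2i: "\<forall>f\<in>idem. c (c f) = f"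
    and E2ii: "\<forall>f\<in>idem. \<forall>g\<in>idem. omega_l g f \<longleftrightarrow> omega_r (c f) (c g)"
    and E2iii: "\<forall>f\<in>idem. \<forall>g\<in>idem. omega_l g (c f) \<longleftrightarrow> Mset g f = {z}"
    and e: "e \<in> idem"
  shows "complements Lle LE (Lclass e) (Lclass (c e))"
proof -
  have zl: "z * f = z" "f * z = z" if "f \<in> idem" for f
    using E1(2) that by (auto simp: omega_def omega_l_def omega_r_def)
  have ce: "c e \<in> idem" using E2_map e by blast
  have cz: "c z \<in> idem" using E2_map E1 by blast
  have top: "f * c z = f" if f: "f \<in> idem" for f
  proof -
    have "Mset f z = {z}"
    proof
      show "Mset f z \<subseteq> {z}" using zl by (auto simp: Mset_def omega_r_def)
      show "{z} \<subseteq> Mset f z" using zl[OF f] E1(1) by (auto simp: Mset_def omega_l_def omega_r_def idem_def)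
    qed
    then show ?thesis using E2iii E1(1) f by (auto simp: omega_l_def)
  qed
  have meet: "h * z = h" if h: "h \<in> idem" "h * e = h" "h * c e = h" for h
  proof -
    have he: "h * (e * x) = h * x" for x using h(2) mult.assoc[of h e x] by simp
    have hh: "h * (h * x) = h * x" for x using idemD[OF h(1)] mult.assoc[of h h x] by simp
    have ee: "e * (e * x) = e * x" for x using idemD[OF e] mult.assoc[of e e x] by simp
    have "Mset h e = {z}" using E2iii e h by (auto simp: omega_l_def)
    moreover have "e * h \<in> Mset h e"
    proof -
      have "e * h * (e * h) = e * h" using he hh idemD[OF h(1)] by (simp add: mult.assoc)
      moreover have "e * h * h = e * h" using idemD[OF h(1)] by (simp add: mult.assoc)
      moreover have "e * (e * h) = e * h" using idemD[OF e] ee by (simp add: mult.assoc)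
      ultimately show ?thesis by (simp add: Mset_def idem_def omega_l_def omega_r_def)
    qed
    ultimately have "e * h = z" by auto
    moreover have "h * (e * h) = h" using he hh idemD[OF h(1)] by simp
    ultimately show ?thesis by simp
  qed
  have key: "h = z" if h: "h \<in> idem" "e * h = h" "c e * h = h" for h
  proof -
    have hh: "h * (h * x) = h * x" for x using idemD[OF h(1)] mult.assoc[of h h x] by simp
    have eh: "e * (h * x) = h * x" for x using h(2) mult.assoc[of e h x] by simp
    have ceh: "c e * (h * x) = h * x" for x using h(3) mult.assoc[of "c e" h x] by simp
    have ch: "c h \<in> idem" "c (c h) = h" using h E2_map E2i by auto
    have cce: "c (c e) = e" using E2i e by auto
    have "omega_l e (c h)" using E2ii[rule_format, OF ch(1) e] ch cce h by (simp add: omega_r_def)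
    then have M1: "Mset e h = {z}" using E2iii h e by auto
    have "omega_l (c e) (c h)" using E2ii[rule_format, OF ch(1) ce] ch h cce by (simp add: omega_r_def)
    then have M2: "Mset (c e) h = {z}" using E2iii h ce by auto
    have "h * e \<in> Mset e h"
    proof -
      have "h * e * (h * e) = h * e" using h idemD[OF h(1)] hh eh by (simp add: mult.assoc)
      moreover have "h * e * e = h * e" using idemD[OF e] by (simp add: mult.assoc)
      moreover have "h * (h * e) = h * e" using idemD[OF h(1)] hh by (simp add: mult.assoc)
      ultimately show ?thesis by (simp add: Mset_def idem_def omega_l_def omega_r_def)
    qed
    then have 1: "h * e = z" using M1 by auto
    have "h * c e \<in> Mset (c e) h"
    proof -
      have "h * c e * (h * c e) = h * c e" using h idemD[OF h(1)] hh ceh by (simp add: mult.assoc)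
      moreover have "h * c e * c e = h * c e" using idemD[OF ce] by (simp add: mult.assoc)
      moreover have "h * (h * c e) = h * c e" using idemD[OF h(1)] hh by (simp add: mult.assoc)
      ultimately show ?thesis by (simp add: Mset_def idem_def omega_l_def omega_r_def)
    qed
    then have 2: "h * c e = z" using M2 by auto
    have "h = h * e * h" using h idemD[OF h(1)] hh eh by (simp add: mult.assoc)
    also have "\<dots> = z * h" using 1 by simp
    also have "\<dots> = z" using zl h by simp
    finally show ?thesis .
  qed
  have join: "c z * f = c z" if f: "f \<in> idem" "e * f = e" "c e * f = c e" for f
  proof -
    have cf: "c f \<in> idem" using E2_map f by auto
    have "omega_r (c f) (c e)" using E2ii[rule_format, OF f(1) e] f by (simp add: omega_l_def)
    moreover have "omega_r (c f) e" using E2ii[rule_format, OF f(1) ce] f E2i e by (simp add: omega_l_def)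
    ultimately have "c f = z" using key[OF cf] by (simp add: omega_r_def)
    then have "omega_r (c f) (c (c z))" using E2i E1 zl by (simp add: omega_r_def)
    then show ?thesis using E2ii[rule_format, OF f(1) cz] by (simp add: omega_l_def)
  qed
  have LE_cases: "\<exists>x\<in>idem. A = Lclass x" if "A \<in> LE" for A using that by (auto simp: LE_def)
  have inLE: "Lclass x \<in> LE" if "x \<in> idem" for x using that by (simp add: LE_def)
  have m: "is_meet Lle LE (Lclass e) (Lclass (c e)) (Lclass z) \<and> is_least Lle LE (Lclass z)"
    unfolding is_meet_def is_least_def
  proof (intro conjI ballI impI)
    show "Lclass z \<in> LE" using inLE E1(1) .
    show "Lle (Lclass z) (Lclass e)" using Lle_iff[OF E1(1) e] zl[OF e] by simp
    show "Lle (Lclass z) (Lclass (c e))" using Lle_iff[OF E1(1) ce] zl[OF ce] by simp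
    show "Lclass z \<in> LE" using inLE E1(1) .
  next
    fix A :: "'a set" assume "A \<in> LE" "Lle A (Lclass e) \<and> Lle A (Lclass (c e))"
    then obtain x where x: "x \<in> idem" "A = Lclass x" "Lle (Lclass x) (Lclass e)" "Lle (Lclass x) (Lclass (c e))"
      using LE_cases by blast
    have "x * e = x" "x * c e = x" using x Lle_iff e ce by auto
    then show "Lle A (Lclass z)" using meet[OF x(1)] Lle_iff[OF x(1) E1(1)] x(2) by simp
  next
    fix A :: "'a set" assume "A \<in> LE"
    then obtain x where x: "x \<in> idem" "A = Lclass x" using LE_cases by blast
    show "Lle (Lclass z) A" using Lle_iff[OF E1(1) x(1)] zl[OF x(1)] x(2) by simp
  qed
  have j: "is_join Lle LE (Lclass e) (Lclass (c e)) (Lclass (c z)) \<and> is_greatest Lle LE (Lclass (c z))"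
    unfolding is_join_def is_greatest_def
  proof (intro conjI ballI impI)
    show "Lclass (c z) \<in> LE" using inLE cz .
    show "Lle (Lclass e) (Lclass (c z))" using Lle_iff[OF e cz] top[OF e] by simp
    show "Lle (Lclass (c e)) (Lclass (c z))" using Lle_iff[OF ce cz] top[OF ce] by simp
    show "Lclass (c z) \<in> LE" using inLE cz .
  next
    fix A :: "'a set" assume "A \<in> LE" "Lle (Lclass e) A \<and> Lle (Lclass (c e)) A"
    then obtain x where x: "x \<in> idem" "A = Lclass x" "Lle (Lclass e) (Lclass x)" "Lle (Lclass (c e)) (Lclass x)"
      using LE_cases by blast
    have "e * x = e" "c e * x = c e" using x Lle_iff e ce by auto
    then show "Lle (Lclass (c z)) A" using join[OF x(1)] Lle_iff[OF cz x(1)] x(2) by simp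
  next
    fix A :: "'a set" assume "A \<in> LE"
    then obtain x where x: "x \<in> idem" "A = Lclass x" using LE_cases by blast
    show "Lle A (Lclass (c z))" using Lle_iff[OF x(1) cz] top[OF x(1)] x(2) by simp
  qed
  show ?thesis unfolding complements_def using m j by blast
qed

end
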